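(* If $X\subset\mathbb{R}^N$ is a nondegenerate continuum and $x\in X$, then every tangent $T\in\mathrm{Tan}(X,x)$ has the property that each connected component of $T$ is unbounded.
   Context: For nonempty $A,B$, $\mathrm{exc}(A,B)=\sup_{a\in A}\inf_{b\in B}|a-b|$; closed sets $X_m$ converge to a closed set $X$ (Attouch–Wets) if for every $r>0$, $\mathrm{exc}(X_m\cap\overline{B}(\mathbf{0},r),X)\to0$ and $\mathrm{exc}(X\cap\overline{B}(\mathbf{0},r),X_m)\to0$. A closed set $T\ni\mathbf{0}$ is a tangent of a closed set $X$ at $x\in X$ if $r_m^{-1}(X-x)\to T$ in this topology for some $r_m\downarrow0$; $\mathrm{Tan}(X,x)$ is the set of tangents. A continuum is a compact connected set; nondegenerate means it has more than one point. *)

theory Defs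
  imports "HOL-Analysis.Analysis"
begin

definition exc :: "'a::metric_space set \<Rightarrow> 'a set \<Rightarrow> real" where
  "exc A B = (if A = {} then 0 else (SUP a\<in>A. infdist a B))"

definition aw_converges :: "(nat \<Rightarrow> 'a::real_normed_vector set) \<Rightarrow> 'a set \<Rightarrow> bool" where
  "aw_converges Xs X \<longleftrightarrow>
     (\<forall>r>0. ((\<lambda>m. exc (Xs m \<inter> cball 0 r) X) \<longlongrightarrow> 0) sequentially \<and>
            ((\<lambda>m. exc (X \<inter> cball 0 r) (Xs m)) \<longlongrightarrow> 0) sequentially)"

definition Tan :: "'a::real_normed_vector set \<Rightarrow> 'a \<Rightarrow> 'a set set" where
  "Tan X x = {T. closed T \<and> 0 \<in> T \<and>
     (\<exists>r::nat \<Rightarrow> real. (\<forall>m. r m > 0) \<and> decseq r \<and> r \<longlonglongrightarrow> 0 \<and>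
        aw_converges (\<lambda>m. (\<lambda>y. inverse (r m) *\<^sub>R (y - x)) ` X) T)}"

end

theory Submission
  imports Defs
begin

lemma infdist_lessE:
  fixes y :: "'a::metric_space"
  assumes "B \<noteq> {}" "infdist y B < e"
  shows "\<exists>b\<in>B. dist y b < e"
proof -
  have "(INF b\<in>B. dist y b) < e" using assms infdist_notempty by metis
  then show ?thesis
    using cInf_lessD[of "(\<lambda>b. dist y b) ` B" e] assms(1) by auto
qed

lemma infdist_ge_sep:
  fixes y :: "'a::metric_space"
  assumes "A \<noteq> {}" "\<And>a. a \<in> A \<Longrightarrow> d \<le> dist y a"
  shows "d \<le> infdist y A"
  using assms by (simp add: infdist_notempty cINF_greatest)

lemma le_exc:
  fixes A B :: "'a::metric_space set"
  assumes "a \<in> A" "bdd_above ((\<lambda>a. infdist a B) ` A)"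
  shows "infdist a B \<le> exc A B"
  using assms unfolding exc_def by (auto intro: cSUP_upper)

lemma sep_lemma:
  fixes T :: "'a::euclidean_space set"
  assumes "closed T" "c \<in> T" "connected_component_set T c \<subseteq> ball 0 R"
  shows "\<exists>A. c \<in> A \<and> compact A \<and> A \<subseteq> ball 0 R \<and> closed (T - A) \<and> A \<subseteq> T"
proof -
  define K where "K = T \<inter> cball 0 R"
  have cK: "compact K" unfolding K_def using assms(1) by (simp add: closed_Int_compact)
  have cinK: "c \<in> K" 
  proof -
    have "c \<in> ball 0 R" using assms(2,3) connected_component_refl[of c T] by blast
    then show ?thesis unfolding K_def using assms(2) by auto
  qed
  have "separated_between (top_of_set K) {c} (K \<inter> sphere 0 R)"
  proof (rule cut_wire_fence_theorem_gen)
    show "compact_space (top_of_set K)"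
      using cK by (simp add: compact_space_subtopology)
    show "Hausdorff_space (top_of_set K) \<or> regular_space (top_of_set K) \<or> normal_space (top_of_set K)"
      by (simp add: Hausdorff_space_subtopology)
    show "compactin (top_of_set K) {c}" using cinK by simp
    show "closedin (top_of_set K) (K \<inter> sphere 0 R)"
      by (simp add: closedin_closed_Int)
    fix C assume "connectedin (top_of_set K) C"
    then have C: "connected C" "C \<subseteq> K" by (auto simp: connectedin_subtopology)
    show "disjnt C {c} \<or> disjnt C (K \<inter> sphere 0 R)"
    proof (cases "c \<in> C")
      case True
      have "C \<subseteq> T" using C K_def by auto
      then have "C \<subseteq> connected_component_set T c"
        using connected_component_maximal[OF True C(1)] by blast
      then have "C \<subseteq> ball 0 R" using assms(3) by blast
      then show ?thesis by (auto simp: disjnt_def)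
    qed (auto simp: disjnt_def)
  qed
  then obtain U V where UV: "openin (top_of_set K) U" "openin (top_of_set K) V"
    "U \<union> V = K" "disjnt U V" "c \<in> U" "K \<inter> sphere 0 R \<subseteq> V"
    unfolding separated_between_def by auto
  have "U = K - V" using UV by (auto simp: disjnt_def)
  then have "closedin (top_of_set K) U"
    using UV(2) closedin_diff[OF closedin_topspace[of "top_of_set K"]] by simp
  then have cU: "closed U"
    using cK compact_imp_closed closedin_closed_trans by blast
  have "V = K - U" using UV by (auto simp: disjnt_def)
  then have "closedin (top_of_set K) V"
    using UV(1) closedin_diff[OF closedin_topspace[of "top_of_set K"]] by simp
  then have cV: "closed V"
    using cK compact_imp_closed closedin_closed_trans by blast
  have UK: "U \<subseteq> K" using UV by auto
  have Uball: "U \<subseteq> ball 0 R"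
  proof
    fix u assume "u \<in> U"
    then have "u \<in> K" "u \<notin> V" using UV UK by (auto simp: disjnt_def)
    then show "u \<in> ball 0 R" using UV(6) unfolding K_def by (auto simp: dist_norm less_le)
  qed
  have "T - U = (T - ball 0 R) \<union> V"
    using UV UK Uball unfolding K_def by (auto simp: disjnt_def dist_norm)
  moreover have "closed ((T - ball 0 R) \<union> V)"
    using cV assms(1) by (intro closed_Un closed_Diff) auto
  ultimately have "closed (T - U)" by simp
  moreover have "compact U" using cU Uball
    by (meson bounded_ball bounded_subset compact_eq_bounded_closed)
  ultimately show ?thesis using UV(5) Uball UK K_def by blast
qed

theorem lemma2p5:
  fixes X :: "'a::euclidean_space set" and x :: 'a and T :: "'a set"
  assumes "compact X" and "connected X" and "\<exists>a\<in>X. \<exists>b\<in>X. a \<noteq> b"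
    and "x \<in> X" and "T \<in> Tan X x"
  shows "\<forall>C\<in>components T. \<not> bounded C"
proof (intro ballI notI)
  fix C assume Ccomp: "C \<in> components T" and Cb: "bounded C"
  obtain r :: "nat \<Rightarrow> real" where rpos: "\<And>m. r m > 0" and rlim: "r \<longlonglongrightarrow> 0"
    and aw: "aw_converges (\<lambda>m. (\<lambda>y. inverse (r m) *\<^sub>R (y - x)) ` X) T"
    and clT: "closed T" and T0: "0 \<in> T"
    using assms(5) unfolding Tan_def by blast
  define S where "S m = (\<lambda>y. inverse (r m) *\<^sub>R (y - x)) ` X" for m
  obtain p where pX: "p \<in> X" and px: "p \<noteq> x" using assms(3) by metis
  obtain c where cT: "c \<in> T" and Ceq: "C = connected_component_set T c"
    using Ccomp components_iff by blast
  obtain R where Rpos: "R > 0" and CR: "C \<subseteq> ball 0 R"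
    using bounded_subset_ballD[OF Cb] by blast
  obtain A where cA: "c \<in> A" and cpA: "compact A" and AR: "A \<subseteq> ball 0 R"
    and clTA: "closed (T - A)" and AT: "A \<subseteq> T"
    using sep_lemma[OF clT cT] CR Ceq by blast
  obtain d where dpos: "d > 0" and dsep: "\<And>a t. a \<in> A \<Longrightarrow> t \<in> T - A \<Longrightarrow> d \<le> dist a t"
    using separate_compact_closed[OF cpA clTA] by blast
  have Ane: "A \<noteq> {}" using cA by blast
  have E1: "\<forall>\<^sub>F m in sequentially. exc (S m \<inter> cball 0 (R + d)) T < d / 6"
  proof -
    have "R + d > 0" using Rpos dpos by simp
    then have "((\<lambda>m. exc (S m \<inter> cball 0 (R + d)) T) \<longlongrightarrow> 0) sequentially"
      using aw unfolding aw_converges_def S_def by blast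
    then show ?thesis using dpos by (intro order_tendstoD(2)) auto
  qed
  have E2: "\<forall>\<^sub>F m in sequentially. exc (T \<inter> cball 0 R) (S m) < d / 3"
  proof -
    have "((\<lambda>m. exc (T \<inter> cball 0 R) (S m)) \<longlongrightarrow> 0) sequentially"
      using aw Rpos unfolding aw_converges_def S_def by blast
    then show ?thesis using dpos by (intro order_tendstoD(2)) auto
  qed
  have npx: "norm (p - x) > 0" using px by simp
  have E3: "\<forall>\<^sub>F m in sequentially. r m < norm (p - x) / (R + d)"
    using rlim npx Rpos dpos by (intro order_tendstoD(2)) auto
  obtain m where m1: "exc (S m \<inter> cball 0 (R + d)) T < d / 6"
    and m2: "exc (T \<inter> cball 0 R) (S m) < d / 3"
    and m3: "r m < norm (p - x) / (R + d)"
    using eventually_happens'[OF sequentially_bot eventually_conj[OF E1 eventually_conj[OF E2 E3]]] by blast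
  have S0: "0 \<in> S m" using assms(4) unfolding S_def by force
  have Sne: "S m \<noteq> {}" using S0 by blast
  have Sconn: "connected (S m)" unfolding S_def
    by (intro connected_continuous_image[OF _ assms(2)] continuous_intros)
  have "bdd_above ((\<lambda>a. infdist a (S m)) ` (T \<inter> cball 0 R))"
  proof (rule bdd_aboveI2)
    fix a assume "a \<in> T \<inter> cball 0 R"
    then show "infdist a (S m) \<le> R" using infdist_le[OF S0, of a] by (auto simp: dist_norm)
  qed
  then have "infdist c (S m) \<le> exc (T \<inter> cball 0 R) (S m)"
    using cT cA AR by (intro le_exc) (auto simp: dist_norm)
  then obtain y1 where y1S: "y1 \<in> S m" and y1c: "dist c y1 < d / 3"
    using infdist_lessE[OF Sne] m2 by (meson le_less_trans)
  have y1A: "infdist y1 A < d / 3"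
    using infdist_le[OF cA, of y1] y1c by (simp add: dist_commute)
  define y2 where "y2 = inverse (r m) *\<^sub>R (p - x)"
  have y2S: "y2 \<in> S m" unfolding S_def y2_def using pX by blast
  have "r m * (R + d) < norm (p - x)"
    using m3 Rpos dpos by (simp add: pos_less_divide_eq)
  then have ny2: "norm y2 > R + d"
  proof -
    have "norm y2 = norm (p - x) / r m"
      unfolding y2_def using rpos[of m] by (simp add: divide_inverse_commute)
    then show ?thesis using \<open>r m * (R + d) < norm (p - x)\<close> rpos[of m]
      by (simp add: pos_less_divide_eq mult.commute)
  qed
  have y2A: "d \<le> infdist y2 A"
  proof (rule infdist_ge_sep[OF Ane])
    fix a assume "a \<in> A"
    then have "norm a < R" using AR by (auto simp: dist_norm)
    then show "d \<le> dist y2 a" using ny2 norm_triangle_ineq2[of y2 a] by (simp add: dist_norm)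
  qed
  \<comment> \<open>intermediate value\<close>
  have conF: "connected ((\<lambda>y. infdist y A) ` S m)"
    by (intro connected_continuous_image[OF _ Sconn] continuous_intros)
  have "d / 2 \<in> (\<lambda>y. infdist y A) ` S m"
  proof -
    have "infdist y1 A \<le> d / 2" "d / 2 \<le> infdist y2 A" using y1A y2A dpos by auto
    moreover have "infdist y1 A \<in> (\<lambda>y. infdist y A) ` S m" "infdist y2 A \<in> (\<lambda>y. infdist y A) ` S m"
      using y1S y2S by auto
    ultimately show ?thesis using conF unfolding connected_iff_interval by blast
  qed
  then obtain y where yS: "y \<in> S m" and yA: "infdist y A = d / 2" by (metis imageE)
  obtain a where aA: "a \<in> A" and ya: "dist y a < d"
    using infdist_lessE[OF Ane, of y d] yA dpos by auto
  have "norm y \<le> R + d"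
    using aA AR ya norm_triangle_ineq[of a "y - a"] by (auto simp: dist_norm norm_minus_commute)
  have "bdd_above ((\<lambda>z. infdist z T) ` (S m \<inter> cball 0 (R + d)))"
  proof (rule bdd_aboveI2)
    fix z assume "z \<in> S m \<inter> cball 0 (R + d)"
    then show "infdist z T \<le> R + d" using infdist_le[OF T0, of z] by (auto simp: dist_norm)
  qed
  then have "infdist y T \<le> exc (S m \<inter> cball 0 (R + d)) T"
    using yS \<open>norm y \<le> R + d\<close> by (intro le_exc) (auto simp: dist_norm)
  then have "infdist y T < d / 6" using m1 by linarith
  moreover have "T \<noteq> {}" using T0 by blast
  ultimately obtain t where tT: "t \<in> T" and yt: "dist y t < d / 6"
    using infdist_lessE[of T y "d / 6"] by blast
  show False
  proof (cases "t \<in> A")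
    case True
    then have "infdist y A \<le> dist y t" by (rule infdist_le)
    then show False using yA yt dpos by simp
  next
    case False
    have "d \<le> infdist t A"
      using dsep[of _ t] tT False by (intro infdist_ge_sep[OF Ane]) (auto simp: dist_commute)
    moreover have "infdist t A \<le> infdist y A + dist t y" by (rule infdist_triangle)
    ultimately show False using yA yt dpos by (simp add: dist_commute)
  qed
qed

end
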